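(* Let $1\le k<n$, let $x_1,\dots,x_k<0$ and $x_{k+1},\dots,x_n\ge0$ be real numbers, and $P_n(z)=(z-x_1)\cdots(z-x_n)$. Then $$d_1\big(Z(P_n),Z(P_n')\cup\{0\}\big)\le\frac1k\sum_{i=1}^k|x_i|+\frac1{n-k}\sum_{i=k+1}^n|x_i|.$$
   Context: For a polynomial $P$, $Z(P)$ is the multiset of its zeros (with multiplicity); $Z(P_n')\cup\{0\}$ denotes the multiset of the $n-1$ critical points of $P_n$ together with one additional point $0$. For multisets $U=\{u_1,\dots,u_n\}$, $V=\{v_1,\dots,v_n\}$, $d_1(U,V)=\min_{\pi\in\mathfrak{S}_n}\sum_{i=1}^n|u_i-v_{\pi(i)}|$. *)

theory Defs
  imports "HOL-Analysis.Analysis" "HOL-Computational_Algebra.Polynomial" "HOL-Combinatorics.Permutations"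
begin

definition d1 :: "complex multiset \<Rightarrow> complex multiset \<Rightarrow> real" where
  "d1 U V = (let us = (SOME l. mset l = U); vs = (SOME l. mset l = V) in
     Min ((\<lambda>\<pi>. \<Sum>i<size U. cmod (us ! i - vs ! (\<pi> i))) ` {\<pi>. \<pi> permutes {..<size U}}))"

definition Pn :: "nat \<Rightarrow> (nat \<Rightarrow> real) \<Rightarrow> complex poly" where
  "Pn n x = (\<Prod>i=1..n. [:- complex_of_real (x i), 1:])"

end

theory Submission
  imports Defs "HOL-Computational_Algebra.Fundamental_Theorem_Algebra"
begin

definition FF :: "nat set \<Rightarrow> (nat \<Rightarrow> real) \<Rightarrow> complex poly" where
  "FF I x = (\<Prod>i\<in>I. [:- complex_of_real (x i), 1:])"
definition RR :: "nat set \<Rightarrow> (nat \<Rightarrow> real) \<Rightarrow> real poly" where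
  "RR I x = (\<Prod>i\<in>I. [:- x i, 1:])"
definition GG :: "nat set \<Rightarrow> (nat \<Rightarrow> real) \<Rightarrow> real \<Rightarrow> real" where
  "GG I x t = (\<Sum>i\<in>I. 1 / (t - x i))"
definition cnt :: "nat set \<Rightarrow> (nat \<Rightarrow> real) \<Rightarrow> real \<Rightarrow> nat" where
  "cnt I x u = card {i\<in>I. x i = u}"
definition HH :: "nat set \<Rightarrow> (nat \<Rightarrow> real) \<Rightarrow> real \<Rightarrow> real" where
  "HH I x t = (\<Sum>i\<in>I. \<Prod>j\<in>I-{i}. (t - x j))"

lemma FF_nz: "finite I \<Longrightarrow> FF I x \<noteq> 0"
  by (simp add: FF_def)

lemma sum_single_mset: "finite I \<Longrightarrow> (\<Sum>i\<in>I. {#f i#}) = image_mset f (mset_set I)"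
  by (induction I rule: finite_induct) auto

lemma proots_FF: "finite I \<Longrightarrow> proots (FF I x) = image_mset (\<lambda>i. complex_of_real (x i)) (mset_set I)"
proof -
  assume f: "finite I"
  have "proots (FF I x) = (\<Sum>i\<in>I. proots [:- complex_of_real (x i), 1:])"
    unfolding FF_def by (rule proots_prod) auto
  also have "\<dots> = (\<Sum>i\<in>I. {#complex_of_real (x i)#})"
    using proots_linear_factor[of "- complex_of_real (x _)"] by simp
  finally show ?thesis using sum_single_mset[OF f] by simp
qed

lemma count_img_mset_set: "finite I \<Longrightarrow> count (image_mset f (mset_set I)) w = card {i\<in>I. f i = w}"
proof (induction I rule: finite_induct)
  case empty then show ?case by simp
next
  case (insert a F)
  have "{i \<in> insert a F. f i = w} = (if f a = w then insert a {i \<in> F. f i = w} else {i \<in> F. f i = w})"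
    by auto
  then show ?case using insert by auto
qed

lemma degree_FF: "finite I \<Longrightarrow> degree (FF I x) = card I"
  using size_proots_complex[of "FF I x"] proots_FF[of I x] by simp

lemma lead_FF: "lead_coeff (FF I x) = 1"
  by (simp add: FF_def lead_coeff_prod)

lemma poly_FF: "poly (FF I x) (complex_of_real t) = complex_of_real (\<Prod>i\<in>I. (t - x i))"
  by (simp add: FF_def poly_prod)

lemma pderiv_lin: "pderiv [:a, 1:] = 1"
  by (simp add: pderiv_pCons)

lemma poly_dFF: "poly (pderiv (FF I x)) (complex_of_real t) = complex_of_real (HH I x t)"
  by (simp add: FF_def HH_def pderiv_prod poly_sum poly_prod pderiv_lin)

lemma poly_RR: "poly (RR I x) t = (\<Prod>i\<in>I. (t - x i))"
  by (simp add: RR_def poly_prod)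

lemma poly_dRR: "poly (pderiv (RR I x)) t = HH I x t"
  by (simp add: RR_def HH_def pderiv_prod poly_sum poly_prod pderiv_lin)

lemma logder:
  assumes "finite I" "t \<notin> x ` I"
  shows "HH I x t = (\<Prod>i\<in>I. (t - x i)) * GG I x t"
proof -
  have "(\<Prod>j\<in>I-{i}. (t - x j)) = (\<Prod>i\<in>I. (t - x i)) * (1 / (t - x i))" if "i \<in> I" for i
  proof -
    have ne: "t - x i \<noteq> 0" using assms that by auto
    have "(\<Prod>i\<in>I. (t - x i)) = (t - x i) * (\<Prod>j\<in>I-{i}. (t - x j))"
      using prod.remove[OF assms(1) that] by simp
    then show ?thesis using ne by simp
  qed
  then show ?thesis unfolding HH_def GG_def by (simp add: sum_distrib_left)
qed

lemma prod_nz: "finite I \<Longrightarrow> t \<notin> (x :: nat \<Rightarrow> real) ` I \<Longrightarrow> (\<Prod>i\<in>I. (t - x i)) \<noteq> 0"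
proof
  assume f: "finite I" and t: "t \<notin> x ` I" and z: "(\<Prod>i\<in>I. (t - x i)) = 0"
  have "\<exists>i\<in>I. t - x i = 0" using z prod_zero_iff[OF f, of "\<lambda>i. t - x i"] by (simp only:)
  then obtain i where "i \<in> I" "t = x i" by auto
  then show False using t by auto
qed

lemma crit_iff:
  assumes "finite I" "t \<notin> x ` I"
  shows "poly (pderiv (FF I x)) (complex_of_real t) = 0 \<longleftrightarrow> GG I x t = 0"
proof -
  have "poly (pderiv (FF I x)) (complex_of_real t) = complex_of_real (HH I x t)" by (rule poly_dFF)
  then have "poly (pderiv (FF I x)) (complex_of_real t) = 0 \<longleftrightarrow> HH I x t = 0" by (simp only: of_real_eq_0_iff)
  moreover have "HH I x t = 0 \<longleftrightarrow> GG I x t = 0"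
    using logder[OF assms] prod_nz[OF assms] by (simp only: mult_eq_0_iff) blast
  ultimately show ?thesis by blast
qed

lemma GG_mono:
  assumes "finite I" "I \<noteq> {}" "t1 < t2" "\<forall>i\<in>I. x i < t1 \<or> t2 < x i"
  shows "GG I x t2 < GG I x t1"
  unfolding GG_def
proof (rule sum_strict_mono)
  fix i assume i: "i \<in> I"
  show "1 / (t2 - x i) < 1 / (t1 - x i)"
    using assms(3) assms(4) i
    by (auto simp: divide_simps) 
qed (use assms in auto)

lemma rolle_FF:
  assumes "a < b" "a \<in> x ` I" "b \<in> x ` I" "finite I"
  shows "\<exists>s. a < s \<and> s < b \<and> poly (pderiv (FF I x)) (complex_of_real s) = 0"
proof -
  have z: "poly (RR I x) c = 0" if c: "c \<in> x ` I" for c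
  proof -
    obtain i where "i \<in> I" "c = x i" using c by blast
    then have "\<exists>j\<in>I. c - x j = 0" by auto
    then show ?thesis unfolding poly_RR using prod_zero_iff[OF assms(4)] by blast
  qed
  have fa: "poly (RR I x) a = poly (RR I x) b"
    using z assms by simp
  have "\<exists>z. a < z \<and> z < b \<and> DERIV (poly (RR I x)) z :> 0"
  proof (rule Rolle[OF assms(1) fa])
    show "continuous_on {a..b} (poly (RR I x))"
      by (rule continuous_at_imp_continuous_on) (meson DERIV_isCont poly_DERIV)
    show "\<And>xa. a < xa \<Longrightarrow> xa < b \<Longrightarrow> poly (RR I x) differentiable at xa"
      using poly_DERIV unfolding real_differentiable_def by blast
  qed
  then obtain z where z: "a < z" "z < b" "DERIV (poly (RR I x)) z :> 0" by blast
  have "poly (pderiv (RR I x)) z = 0"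
    using DERIV_unique[OF poly_DERIV z(3)] by simp
  then have "HH I x z = 0" by (simp only: poly_dRR)
  then have "poly (pderiv (FF I x)) (complex_of_real z) = 0" by (simp only: poly_dFF of_real_0)
  then show ?thesis using z by blast
qed

lemma sum_cnt: "finite I \<Longrightarrow> (\<Sum>u\<in>x ` I. real (cnt I x u) * h u) = (\<Sum>i\<in>I. h (x i))"
proof -
  assume f: "finite I"
  have "(\<Sum>i\<in>I. h (x i)) = (\<Sum>u\<in>x ` I. \<Sum>i\<in>{i\<in>I. x i = u}. h (x i))"
    by (rule sum.image_gen[OF f])
  also have "\<dots> = (\<Sum>u\<in>x ` I. real (cnt I x u) * h u)"
    by (intro sum.cong refl) (simp add: cnt_def)
  finally show ?thesis by simp
qed

lemma sum_cnt_nat: "finite I \<Longrightarrow> (\<Sum>u\<in>x ` I. cnt I x u) = card I"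
proof -
  assume f: "finite I"
  have "card I = (\<Sum>i\<in>I. 1::nat)" by simp
  also have "\<dots> = (\<Sum>u\<in>x ` I. \<Sum>i\<in>{i\<in>I. x i = u}. 1::nat)"
    by (rule sum.image_gen[OF f])
  also have "\<dots> = (\<Sum>u\<in>x ` I. cnt I x u)"
    by (intro sum.cong refl) (simp add: cnt_def)
  finally show ?thesis by simp
qed

lemma cnt_pos: "finite I \<Longrightarrow> u \<in> x ` I \<Longrightarrow> cnt I x u \<ge> 1"
proof -
  assume f: "finite I" and u: "u \<in> x ` I"
  then obtain i where "i \<in> I" "x i = u" by auto
  then have "i \<in> {i\<in>I. x i = u}" by simp
  moreover have "finite {i\<in>I. x i = u}" using f by simp
  ultimately have "card {i\<in>I. x i = u} > 0" using card_gt_0_iff by blast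
  then show ?thesis unfolding cnt_def by simp
qed

lemma poly_FF_root:
  assumes f: "finite I" and i: "i \<in> I"
  shows "poly (FF I x) (complex_of_real (x i)) = 0"
proof -
  have "\<exists>j\<in>I. x i - x j = 0" using i by auto
  then have "(\<Prod>j\<in>I. x i - x j) = 0" using prod_zero_iff[OF f, of "\<lambda>j. x i - x j"] by (simp only:)
  then show ?thesis by (simp only: poly_FF of_real_0)
qed

lemma sum_nth_set:
  assumes "distinct rs"
  shows "(\<Sum>j<length rs. h (rs ! j)) = (\<Sum>u\<in>set rs. h u)"
  using sum.reindex_bij_betw[OF bij_betw_nth[OF assms refl refl], of h] by simp

lemma order_FF: "finite I \<Longrightarrow> order (complex_of_real u) (FF I x) = cnt I x u"
  using count_proots[OF FF_nz, of I x "complex_of_real u"]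
  by (simp add: proots_FF count_img_mset_set cnt_def)

lemma sum_m1: "(\<Sum>j<(m::nat). (f j::nat) - 1) + m = (\<Sum>j<m. f j - 1 + 1)"
  by (induction m) auto

lemma GL:
  fixes I :: "nat set" and x :: "nat \<Rightarrow> real"
  assumes fin: "finite I" and ne: "I \<noteq> {}"
  defines "rs \<equiv> sorted_list_of_set (x ` I)"
  obtains s where "\<forall>j. Suc j < length rs \<longrightarrow> rs!j < s j \<and> s j < rs!(Suc j) \<and> poly (pderiv (FF I x)) (complex_of_real (s j)) = 0"
   and "proots (pderiv (FF I x)) = (\<Sum>j<length rs. replicate_mset (cnt I x (rs!j) - 1) (complex_of_real (rs!j))) + (\<Sum>j<length rs - 1. {#complex_of_real (s j)#})"
proof -
  define S where "S = x ` I"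
  define m where "m = length rs"
  have finS: "finite S" using fin S_def by simp
  have rsprop: "sorted_wrt (<) rs \<and> set rs = S \<and> length rs = card S"
    using sorted_list_of_set_unique[OF finS, of rs] rs_def S_def by simp
  have srt: "sorted_wrt (<) rs" and setrs: "set rs = S" and lenrs: "m = card S"
    using rsprop m_def by auto
  have dist: "distinct rs" using rs_def by simp
  have lt: "rs!i < rs!j" if "i < j" "j < m" for i j
    using sorted_wrt_nth_less[OF srt that(1)] that m_def by simp
  have le: "rs!i \<le> rs!j" if "i \<le> j" "j < m" for i j
    using lt that by (cases "i = j") (auto simp: less_imp_le)
  have inS: "rs!j \<in> S" if "j < m" for j using setrs that m_def by auto
  have "\<forall>j. \<exists>s. Suc j < m \<longrightarrow> rs!j < s \<and> s < rs!(Suc j) \<and> poly (pderiv (FF I x)) (complex_of_real s) = 0"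
  proof
    fix j
    show "\<exists>s. Suc j < m \<longrightarrow> rs!j < s \<and> s < rs!(Suc j) \<and> poly (pderiv (FF I x)) (complex_of_real s) = 0"
    proof (cases "Suc j < m")
      case True
      then show ?thesis using rolle_FF[OF lt[OF lessI True] _ _ fin] inS[of j] inS[OF True] S_def by auto
    qed simp
  qed
  then obtain s where s: "\<forall>j. Suc j < m \<longrightarrow> rs!j < s j \<and> s j < rs!(Suc j) \<and> poly (pderiv (FF I x)) (complex_of_real (s j)) = 0"
    by metis
  have s_notS: "s j \<noteq> rs!l" if "Suc j < m" "l < m" for j l
  proof (cases "l \<le> j")
    case True then show ?thesis using le[of l j] s that by fastforce
  next
    case False then show ?thesis using le[of "Suc j" l] s that by fastforce
  qed
  have s_inj: "s j < s l" if "j < l" "Suc l < m" for j l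
  proof -
    have "s j < rs!(Suc j)" using s that by auto
    also have "\<dots> \<le> rs!l" using le that by auto
    also have "\<dots> < s l" using s that by auto
    finally show ?thesis .
  qed
  define f where "f = FF I x"
  have fnz: "f \<noteq> 0" using FF_nz[OF fin] f_def by simp
  have degf: "degree f = card I" using degree_FF[OF fin] f_def by simp
  have cI: "card I \<ge> 1" using fin ne by (simp add: Suc_le_eq card_gt_0_iff)
  have dnz: "pderiv f \<noteq> 0" using degf cI pderiv_eq_0_iff[of f] by simp
  define D where "D = (\<Sum>j<m. replicate_mset (cnt I x (rs!j) - 1) (complex_of_real (rs!j))) + (\<Sum>j<m - 1. {#complex_of_real (s j)#})"
  have sub: "D \<subseteq># proots (pderiv f)"
    unfolding subseteq_mset_def
  proof
    fix w
    show "count D w \<le> count (proots (pderiv f)) w"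
    proof (cases "\<exists>l<m. w = complex_of_real (rs!l)")
      case True
      then obtain l where l: "l < m" "w = complex_of_real (rs!l)" by blast
      have c1: "(\<Sum>j<m. count (replicate_mset (cnt I x (rs!j) - 1) (complex_of_real (rs!j))) w) = cnt I x (rs!l) - 1"
      proof -
        have "(\<Sum>j<m. count (replicate_mset (cnt I x (rs!j) - 1) (complex_of_real (rs!j))) w)
            = (\<Sum>j<m. if j = l then cnt I x (rs!j) - 1 else 0)"
        proof (intro sum.cong refl)
          fix j assume "j \<in> {..<m}"
          then have e: "(w = complex_of_real (rs!j)) = (j = l)"
            using l nth_eq_iff_index_eq[OF dist] m_def by auto
          show "count (replicate_mset (cnt I x (rs!j) - 1) (complex_of_real (rs!j))) w = (if j = l then cnt I x (rs!j) - 1 else 0)"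
            by (simp only: count_replicate_mset e)
        qed
        also have "\<dots> = cnt I x (rs!l) - 1" using l by simp
        finally show ?thesis .
      qed
      have c2: "(\<Sum>j<m - 1. count {#complex_of_real (s j)#} w) = 0"
        using s_notS l by auto
      have "count D w = cnt I x (rs!l) - 1" unfolding D_def count_union count_sum c1 c2 by simp
      moreover have "poly f w = 0"
      proof -
        obtain i where "i \<in> I" "rs!l = x i" using inS[OF l(1)] S_def by auto
        then show ?thesis using l poly_FF_root[OF fin, of i x] f_def by simp
      qed
      then have "order w f = Suc (order w (pderiv f))" using order_pderiv[OF fnz] by blast
      moreover have "order w f = cnt I x (rs!l)" using order_FF[OF fin] l f_def by simp
      ultimately show ?thesis using dnz by simp
    next
      case False
      have c1: "(\<Sum>j<m. count (replicate_mset (cnt I x (rs!j) - 1) (complex_of_real (rs!j))) w) = 0"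
        using False by auto
      show ?thesis
      proof (cases "\<exists>j0<m-1. w = complex_of_real (s j0)")
        case True
        then obtain j0 where j0: "j0 < m - 1" "w = complex_of_real (s j0)" by blast
        have "(\<Sum>j<m - 1. count {#complex_of_real (s j)#} w) = (\<Sum>j<m - 1. if j = j0 then 1 else 0)"
        proof (intro sum.cong refl)
          fix j assume j: "j \<in> {..<m-1}"
          have jm: "Suc j < m" "Suc j0 < m" using j j0 by auto
          have "(s j = s j0) = (j = j0)"
          proof (cases rule: linorder_cases[of j j0])
            case less then show ?thesis using s_inj[OF less jm(2)] by simp
          next
            case greater then show ?thesis using s_inj[OF greater jm(1)] by simp
          qed simp
          then show "count {#complex_of_real (s j)#} w = (if j = j0 then 1 else 0)" using j0 by auto
        qed
        also have "\<dots> = 1" using j0 by simp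
        finally have "count D w = 1" unfolding D_def count_union count_sum c1 by simp
        moreover have "poly (pderiv f) w = 0" using s j0 f_def by auto
        then have "order w (pderiv f) \<noteq> 0" using dnz order_root by blast
        ultimately show ?thesis using dnz by simp
      next
        case False
        then have "(\<Sum>j<m - 1. count {#complex_of_real (s j)#} w) = 0" by auto
        then have "count D w = 0" unfolding D_def count_union count_sum c1 by simp
        then show ?thesis by simp
      qed
    qed
  qed
  have sz1: "size D = (\<Sum>j<m. cnt I x (rs!j) - 1) + (m - 1)"
    unfolding D_def by (simp add: size_multiset_sum)
  have sz2: "(\<Sum>j<m. cnt I x (rs!j) - 1) + m = (\<Sum>j<m. cnt I x (rs!j))"
  proof -
    have "(\<Sum>j<m. cnt I x (rs!j) - 1) + m = (\<Sum>j<m. cnt I x (rs!j) - 1 + 1)"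
      by (rule sum_m1)
    also have "\<dots> = (\<Sum>j<m. cnt I x (rs!j))"
    proof (intro sum.cong refl)
      fix j assume "j \<in> {..<m}"
      then have "cnt I x (rs!j) \<ge> 1" using cnt_pos[OF fin, of "rs!j" x] inS[of j] S_def by simp
      then show "cnt I x (rs!j) - 1 + 1 = cnt I x (rs!j)" by simp
    qed
    finally show ?thesis .
  qed
  have sz3: "(\<Sum>j<m. cnt I x (rs!j)) = card I"
    using sum_nth_set[OF dist, of "cnt I x"] setrs S_def sum_cnt_nat[OF fin] m_def by simp
  have m1: "m \<ge> 1" using lenrs finS ne S_def by (simp add: Suc_le_eq card_gt_0_iff)
  have szD: "size D = card I - 1" using sz1 sz2 sz3 m1 by linarith
  have szP: "size (proots (pderiv f)) = card I - 1"
    using size_proots_complex[of "pderiv f"] degree_pderiv[of f] degf by simp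
  have "D = proots (pderiv f)"
  proof (rule ccontr)
    assume "D \<noteq> proots (pderiv f)"
    then have "D \<subset># proots (pderiv f)" using sub by (simp add: subset_mset.le_neq_trans)
    then show False using mset_subset_size szD szP by fastforce
  qed
  then show ?thesis using that[of s] s m_def f_def D_def by simp
qed

lemma lin_mult: "[:-(a::'a::comm_ring_1), 1:] * q = smult (-a) q + pCons 0 q"
  by (simp add: mult_pCons_left smult_1_left)

lemma vieta_prod:
  fixes M :: "'a::comm_ring_1 multiset"
  shows "coeff (\<Prod>a\<in>#M. [:-a, 1:]) (size M) = 1 \<and> (\<forall>n>size M. coeff (\<Prod>a\<in>#M. [:-a, 1:]) n = 0)
     \<and> (M \<noteq> {#} \<longrightarrow> coeff (\<Prod>a\<in>#M. [:-a, 1:]) (size M - 1) = - sum_mset M)"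
proof (induction M)
  case empty
  then show ?case by (simp add: coeff_1)
next
  case (add a M)
  define q where "q = (\<Prod>a\<in>#M. [:-a, 1:])"
  have P: "(\<Prod>a\<in>#add_mset a M. [:-a, 1:]) = smult (-a) q + pCons 0 q"
    by (simp add: q_def lin_mult)
  have IH1: "coeff q (size M) = 1" and IH2: "\<And>n. n > size M \<Longrightarrow> coeff q n = 0"
    and IH3: "M \<noteq> {#} \<Longrightarrow> coeff q (size M - 1) = - sum_mset M"
    using add q_def by auto
  have A: "coeff (\<Prod>a\<in>#add_mset a M. [:-a, 1:]) (size (add_mset a M)) = 1"
    unfolding P using IH1 IH2[of "Suc (size M)"] by simp
  have B: "\<forall>n>size (add_mset a M). coeff (\<Prod>a\<in>#add_mset a M. [:-a, 1:]) n = 0"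
  proof (intro allI impI)
    fix n assume "n > size (add_mset a M)"
    then obtain n' where "n = Suc n'" "n' > size M" by (cases n) auto
    then show "coeff (\<Prod>a\<in>#add_mset a M. [:-a, 1:]) n = 0"
      unfolding P using IH2[of n'] IH2[of n] by simp
  qed
  have C: "coeff (\<Prod>a\<in>#add_mset a M. [:-a, 1:]) (size (add_mset a M) - 1) = - sum_mset (add_mset a M)"
  proof (cases "M = {#}")
    case True
    then show ?thesis unfolding P q_def by simp
  next
    case False
    then obtain n' where n': "size M = Suc n'" by (cases "size M") auto
    then show ?thesis unfolding P using IH1 IH3[OF False] by (simp add: algebra_simps)
  qed
  show ?case using A B C by blast
qed

lemma vieta:
  fixes p :: "complex poly"
  assumes "degree p \<ge> 1"
  shows "sum_mset (proots p) = - coeff p (degree p - 1) / lead_coeff p"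
proof -
  have pnz: "p \<noteq> 0" using assms by auto
  then have lnz: "lead_coeff p \<noteq> 0" by simp
  have sz: "size (proots p) = degree p" by (rule size_proots_complex)
  have ne: "proots p \<noteq> {#}" using sz assms by auto
  have "coeff p (degree p - 1) = lead_coeff p * coeff (\<Prod>a\<in>#proots p. [:-a, 1:]) (size (proots p) - 1)"
    using complex_poly_decompose_multiset[of p] sz by (metis coeff_smult)
  also have "\<dots> = - lead_coeff p * sum_mset (proots p)"
    using vieta_prod[of "proots p"] ne by simp
  finally show ?thesis using lnz by (simp add: field_simps)
qed

lemma sum_proots_dFF:
  assumes fin: "finite I" and ne: "I \<noteq> {}"
  shows "sum_mset (proots (pderiv (FF I x))) = complex_of_real ((real (card I) - 1) / real (card I) * (\<Sum>i\<in>I. x i))"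
proof -
  define d where "d = card I"
  define f where "f = FF I x"
  have d1: "d \<ge> 1" using fin ne d_def by (simp add: Suc_le_eq card_gt_0_iff)
  have degf: "degree f = d" using degree_FF[OF fin] d_def f_def by simp
  have lf: "lead_coeff f = 1" using lead_FF f_def by simp
  have sf: "sum_mset (proots f) = (\<Sum>i\<in>I. complex_of_real (x i))"
    using proots_FF[OF fin] f_def by (simp add: sum_unfold_sum_mset)
  have cf: "coeff f (d - 1) = - (\<Sum>i\<in>I. complex_of_real (x i))"
    using vieta[of f] degf d1 lf sf by simp
  show ?thesis
  proof (cases "d = 1")
    case True
    then have "degree (pderiv f) = 0" using degf degree_pderiv[of f] by simp
    then have "proots (pderiv f) = {#}" using size_proots_complex[of "pderiv f"] by simp
    then show ?thesis using True d_def f_def by simp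
  next
    case False
    then have d2: "d \<ge> 2" using d1 by simp
    have dd: "degree (pderiv f) = d - 1" using degf degree_pderiv[of f] by simp
    have ld: "lead_coeff (pderiv f) = of_nat d"
      using dd lf degf d2 by (simp add: coeff_pderiv)
    have cd: "coeff (pderiv f) (d - 2) = of_nat (d - 1) * coeff f (d - 1)"
      using d2 by (simp add: coeff_pderiv Suc_diff_Suc numeral_2_eq_2)
    have "sum_mset (proots (pderiv f)) = - coeff (pderiv f) (d - 1 - 1) / lead_coeff (pderiv f)"
      using vieta[of "pderiv f"] dd d2 by simp
    also have "\<dots> = of_nat (d - 1) * (\<Sum>i\<in>I. complex_of_real (x i)) / of_nat d"
      using cd cf ld by (simp add: numeral_2_eq_2)
    finally show ?thesis using d1 d_def f_def by (simp add: of_nat_diff)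
  qed
qed

lemma d1_le:
  fixes M :: "(complex \<times> complex) multiset"
  assumes U: "image_mset fst M = U" and V: "image_mset snd M = V"
  shows "d1 U V \<le> (\<Sum>p\<in>#M. cmod (fst p - snd p))"
proof -
  obtain ps where ps: "mset ps = M" using ex_mset by blast
  define us where "us = (SOME l. mset l = U)"
  define vs where "vs = (SOME l. mset l = V)"
  have us: "mset us = U" unfolding us_def by (rule someI_ex) (rule ex_mset)
  have vs: "mset vs = V" unfolding vs_def by (rule someI_ex) (rule ex_mset)
  define N where "N = length ps"
  have szU: "size U = N" using U ps N_def by auto
  have "mset us = mset (map fst ps)" using us U ps by simp
  then obtain \<sigma> where \<sigma>: "\<sigma> permutes {..<length (map fst ps)}" "permute_list \<sigma> (map fst ps) = us"
    using mset_eq_permutation by metis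
  have "mset vs = mset (map snd ps)" using vs V ps by simp
  then obtain \<tau> where \<tau>: "\<tau> permutes {..<length (map snd ps)}" "permute_list \<tau> (map snd ps) = vs"
    using mset_eq_permutation by metis
  have sN: "\<sigma> permutes {..<N}" and tN: "\<tau> permutes {..<N}" using \<sigma> \<tau> N_def by auto
  define \<pi> where "\<pi> = inv \<tau> \<circ> \<sigma>"
  have pN: "\<pi> permutes {..<N}" unfolding \<pi>_def by (rule permutes_compose[OF sN permutes_inv[OF tN]])
  define h where "h = (\<lambda>p::complex \<times> complex. cmod (fst p - snd p))"
  have eq: "cmod (us ! i - vs ! (\<pi> i)) = h (ps ! \<sigma> i)" if i: "i < N" for i
  proof -
    have si: "\<sigma> i < N" using permutes_in_image[OF sN] i by auto
    have pi: "\<pi> i < N" using permutes_in_image[OF pN] i by auto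
    have "us ! i = fst (ps ! \<sigma> i)"
      using \<sigma>(2)[symmetric] permute_list_nth[OF \<sigma>(1)] i si N_def by auto
    moreover have "vs ! (\<pi> i) = snd (ps ! \<sigma> i)"
    proof -
      have "vs ! (\<pi> i) = map snd ps ! (\<tau> (\<pi> i))"
        using \<tau>(2)[symmetric] permute_list_nth[OF \<tau>(1)] pi N_def by auto
      also have "\<tau> (\<pi> i) = \<sigma> i" unfolding \<pi>_def using permutes_inverses(1)[OF tN] by simp
      finally show ?thesis using si N_def by simp
    qed
    ultimately show ?thesis unfolding h_def by simp
  qed
  have "(\<Sum>i<N. cmod (us ! i - vs ! (\<pi> i))) = (\<Sum>i<N. h (ps ! \<sigma> i))"
    using eq by simp
  also have "\<dots> = (\<Sum>i<N. h (ps ! i))"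
    using sum.permute[OF sN, of "\<lambda>i. h (ps ! i)"] by (simp add: comp_def)
  also have "\<dots> = sum_list (map h ps)"
    by (simp add: sum_list_sum_nth atLeast0LessThan N_def)
  also have "\<dots> = (\<Sum>p\<in>#M. h p)"
    using ps by (metis mset_map sum_mset_sum_list)
  finally have val: "(\<Sum>i<N. cmod (us ! i - vs ! (\<pi> i))) = (\<Sum>p\<in>#M. h p)" .
  have "d1 U V = Min ((\<lambda>\<pi>. \<Sum>i<N. cmod (us ! i - vs ! (\<pi> i))) ` {\<pi>. \<pi> permutes {..<N}})"
    unfolding d1_def us_def vs_def szU Let_def by simp
  also have "\<dots> \<le> (\<Sum>i<N. cmod (us ! i - vs ! (\<pi> i)))"
    by (rule Min_le) (auto intro: finite_permutations simp: pN)
  finally show ?thesis using val h_def by simp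
qed

lemma image_mset_sum': "finite A \<Longrightarrow> image_mset h (sum f A) = (\<Sum>a\<in>A. image_mset h (f a))"
  by (induction A rule: finite_induct) auto

lemma sum_mset_sum': "finite A \<Longrightarrow> sum_mset (sum f A) = (\<Sum>a\<in>A. sum_mset (f a))"
  by (induction A rule: finite_induct) auto

lemma sum_split_add: "(\<Sum>j<(p::nat) + q. g j) = (\<Sum>j<p. g j) + (\<Sum>j<q. (g (p + j) :: 'b::comm_monoid_add))"
  by (induction q) (auto simp: add_ac)

lemma zsplit:
  fixes f :: "real \<Rightarrow> 'b::comm_monoid_add"
  assumes "1 \<le> p" "p < m" "\<forall>j<p-1. z j = r j" "\<forall>j. p \<le> j \<and> j < m-1 \<longrightarrow> z j = r (Suc j)"
    "(z (p-1) = r (p-1) \<and> e = r p) \<or> (z (p-1) = r p \<and> e = r (p-1))"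
  shows "(\<Sum>j<m-1. f (z j)) + f e = (\<Sum>j<m. f (r j))"
proof -
  obtain p' where p': "p = Suc p'" using assms(1) by (cases p) auto
  obtain q where q: "m = Suc (p + q)" using assms(2) by (metis less_imp_Suc_add)
  have A: "(\<Sum>j<m-1. f (z j)) = (\<Sum>j<p'. f (r j)) + f (z p') + (\<Sum>j<q. f (r (Suc (Suc (p' + j)))))"
  proof -
    have "(\<Sum>j<m-1. f (z j)) = (\<Sum>j<Suc p'. f (z j)) + (\<Sum>j<q. f (z (Suc p' + j)))"
      using sum_split_add[of "\<lambda>j. f (z j)" "Suc p'" q] q p' by simp
    also have "(\<Sum>j<Suc p'. f (z j)) = (\<Sum>j<p'. f (r j)) + f (z p')"
      using assms(3) p' by simp
    also have "(\<Sum>j<q. f (z (Suc p' + j))) = (\<Sum>j<q. f (r (Suc (Suc (p' + j)))))"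
      using assms(4) p' q by (intro sum.cong refl) auto
    finally show ?thesis .
  qed
  have B: "(\<Sum>j<m. f (r j)) = (\<Sum>j<p'. f (r j)) + f (r p') + f (r (Suc p')) + (\<Sum>j<q. f (r (Suc (Suc (p' + j)))))"
  proof -
    have "(\<Sum>j<m. f (r j)) = (\<Sum>j<Suc (Suc p'). f (r j)) + (\<Sum>j<q. f (r (Suc (Suc p') + j)))"
      using sum_split_add[of "\<lambda>j. f (r j)" "Suc (Suc p')" q] q p' by simp
    then show ?thesis by simp
  qed
  show ?thesis using A B assms(5) p' by (auto simp: ac_simps)
qed

lemma proots_FF_rs:
  fixes x :: "nat \<Rightarrow> real" and I :: "nat set"
  assumes fin: "finite I"
  defines "rs \<equiv> sorted_list_of_set (x ` I)"
  shows "proots (FF I x) = (\<Sum>j<length rs. replicate_mset (cnt I x (rs!j)) (complex_of_real (rs!j)))"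
proof (rule multiset_eqI)
  fix w
  have setrs: "set rs = x ` I" using fin rs_def by simp
  have dist: "distinct rs" using rs_def by simp
  have lhs: "count (proots (FF I x)) w = card {i\<in>I. complex_of_real (x i) = w}"
    using proots_FF[OF fin] count_img_mset_set[OF fin] by simp
  show "count (proots (FF I x)) w = count (\<Sum>j<length rs. replicate_mset (cnt I x (rs!j)) (complex_of_real (rs!j))) w"
  proof (cases "\<exists>l<length rs. w = complex_of_real (rs!l)")
    case True
    then obtain l where l: "l < length rs" "w = complex_of_real (rs!l)" by blast
    have "count (\<Sum>j<length rs. replicate_mset (cnt I x (rs!j)) (complex_of_real (rs!j))) w
        = (\<Sum>j<length rs. if j = l then cnt I x (rs!j) else 0)"
      unfolding count_sum
    proof (intro sum.cong refl)
      fix j assume "j \<in> {..<length rs}"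
      then have e: "(w = complex_of_real (rs!j)) = (j = l)"
        using l nth_eq_iff_index_eq[OF dist] by auto
      show "count (replicate_mset (cnt I x (rs!j)) (complex_of_real (rs!j))) w = (if j = l then cnt I x (rs!j) else 0)"
        by (simp only: count_replicate_mset e)
    qed
    also have "\<dots> = cnt I x (rs!l)" using l by simp
    finally show ?thesis using lhs l by (simp add: cnt_def)
  next
    case False
    then have "w \<notin> complex_of_real ` x ` I"
      using setrs by (metis imageE in_set_conv_nth)
    then have "{i\<in>I. complex_of_real (x i) = w} = {}" by auto
    moreover have "count (\<Sum>j<length rs. replicate_mset (cnt I x (rs!j)) (complex_of_real (rs!j))) w = 0"
      using False by (auto simp: count_sum)
    ultimately show ?thesis using lhs by (metis card.empty)
  qed
qed

lemma gap:
  fixes rs :: "real list"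
  assumes "sorted_wrt (<) rs" "Suc j < length rs" "u \<in> set rs"
  shows "u \<le> rs!j \<or> rs!(Suc j) \<le> u"
proof -
  obtain l where l: "l < length rs" "u = rs!l" using assms(3) by (metis in_set_conv_nth)
  show ?thesis
  proof (cases "l \<le> j")
    case True
    then show ?thesis using l sorted_wrt_nth_less[OF assms(1), of l j] assms(2) by (cases "l = j") auto
  next
    case False
    then show ?thesis using l sorted_wrt_nth_less[OF assms(1), of "Suc j" l] by (cases "l = Suc j") auto
  qed
qed

lemma GG_union: "finite A \<Longrightarrow> finite B \<Longrightarrow> A \<inter> B = {} \<Longrightarrow> GG (A \<union> B) x t = GG A x t + GG B x t"
  unfolding GG_def by (rule sum.union_disjoint)

lemma GG_neg: "finite A \<Longrightarrow> A \<noteq> {} \<Longrightarrow> \<forall>i\<in>A. t < x i \<Longrightarrow> GG A x t < 0"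
  unfolding GG_def using sum_strict_mono[of A "\<lambda>i. 1 / (t - x i)" "\<lambda>_. 0"] by (auto simp: divide_neg_pos)

lemma GG_pos: "finite A \<Longrightarrow> A \<noteq> {} \<Longrightarrow> \<forall>i\<in>A. x i < t \<Longrightarrow> GG A x t > 0"
  unfolding GG_def using sum_strict_mono[of A "\<lambda>_. 0" "\<lambda>i. 1 / (t - x i)"] by auto

lemma sls: "finite A \<Longrightarrow> sorted_wrt (<) (sorted_list_of_set A) \<and> set (sorted_list_of_set A) = A \<and> length (sorted_list_of_set A) = card A"
  using sorted_list_of_set_unique[of A "sorted_list_of_set A"] by simp

lemma img_rep: "image_mset f (replicate_mset n a) = replicate_mset n (f a)"
  by (induction n) auto

lemma cmod_real_diff: "cmod (complex_of_real a - complex_of_real b) = \<bar>a - b\<bar>"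
  by (metis norm_of_real of_real_diff)

theorem mainTheorem14:
  fixes n k :: nat and x :: "nat \<Rightarrow> real"
  assumes "1 \<le> k" and "k < n"
    and "\<forall>i\<in>{1..k}. x i < 0"
    and "\<forall>i\<in>{k+1..n}. x i \<ge> 0"
  shows "d1 (proots (Pn n x)) (proots (pderiv (Pn n x)) + {#0#})
         \<le> (1 / real k) * (\<Sum>i=1..k. \<bar>x i\<bar>) + (1 / real (n - k)) * (\<Sum>i=k+1..n. \<bar>x i\<bar>)"
proof -
  define IP where "IP = {1..n}"
  define IQ where "IQ = {1..k}"
  define IR where "IR = {k+1..n}"
  have PnF: "Pn n x = FF IP x" by (simp add: Pn_def FF_def IP_def)
  have finP: "finite IP" and finQ: "finite IQ" and finR: "finite IR" by (auto simp: IP_def IQ_def IR_def)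
  have neQ: "IQ \<noteq> {}" using assms(1) by (auto simp: IQ_def)
  have neR: "IR \<noteq> {}" using assms(2) by (auto simp: IR_def)
  have neP: "IP \<noteq> {}" using assms by (auto simp: IP_def)
  have disj: "IQ \<inter> IR = {}" by (auto simp: IQ_def IR_def)
  have un: "IP = IQ \<union> IR" using assms by (auto simp: IP_def IQ_def IR_def)
  have cardQ: "card IQ = k" and cardR: "card IR = n - k" by (auto simp: IQ_def IR_def)
  have xQ: "\<forall>i\<in>IQ. x i < 0" using assms(3) IQ_def by simp
  have xR: "\<forall>i\<in>IR. x i \<ge> 0" using assms(4) IR_def by simp
  define SQ where "SQ = x ` IQ"
  define SR where "SR = x ` IR"
  define rsQ where "rsQ = sorted_list_of_set SQ"
  define rsR where "rsR = sorted_list_of_set SR"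
  define rs where "rs = sorted_list_of_set (x ` IP)"
  have SQneg: "\<forall>u\<in>SQ. u < 0" using xQ SQ_def by auto
  have SRpos: "\<forall>u\<in>SR. u \<ge> 0" using xR SR_def by auto
  have finSQ: "finite SQ" and finSR: "finite SR" using finQ finR SQ_def SR_def by auto
  have sQ_: "sorted_wrt (<) rsQ \<and> set rsQ = SQ \<and> length rsQ = card SQ" using sls[OF finSQ] rsQ_def by simp
  have sR_: "sorted_wrt (<) rsR \<and> set rsR = SR \<and> length rsR = card SR" using sls[OF finSR] rsR_def by simp
  have SPeq: "x ` IP = SQ \<union> SR" using un SQ_def SR_def by auto
  have disjS: "SQ \<inter> SR = {}" using SQneg SRpos by force
  have rs_app: "rs = rsQ @ rsR"
  proof -
    have "sorted_wrt (<) (rsQ @ rsR) \<and> set (rsQ @ rsR) = x ` IP \<and> length (rsQ @ rsR) = card (x ` IP)"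
      using sQ_ sR_ SQneg SRpos SPeq disjS finSQ finSR
      by (auto simp: sorted_wrt_append card_Un_disjoint intro: less_le_trans)
    then show ?thesis using sorted_list_of_set_unique[of "x ` IP" "rsQ @ rsR"] finP rs_def by simp
  qed
  have srt: "sorted_wrt (<) rs" and setrs: "set rs = x ` IP" using sls[of "x ` IP"] finP rs_def by auto
  define p where "p = length rsQ"
  define q where "q = length rsR"
  define m where "m = length rs"
  have mpq: "m = p + q" using rs_app m_def p_def q_def by simp
  have p1: "p \<ge> 1" using sQ_ p_def neQ SQ_def finSQ by (simp add: Suc_le_eq card_gt_0_iff)
  have q1: "q \<ge> 1" using sR_ q_def neR SR_def finSR by (simp add: Suc_le_eq card_gt_0_iff)
  have rsQn: "rs!j = rsQ!j" if "j < p" for j using rs_app that p_def by (simp add: nth_append)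
  have rsRn: "rs!(p+j) = rsR!j" for j using rs_app p_def by (simp add: nth_append)
  have rsQneg: "rsQ!j < 0" if "j < p" for j using sQ_ SQneg that p_def by (metis nth_mem)
  have rsRpos: "rsR!j \<ge> 0" if "j < q" for j using sR_ SRpos that q_def by (metis nth_mem)
  obtain sP where sP1: "\<forall>j. Suc j < m \<longrightarrow> rs!j < sP j \<and> sP j < rs!(Suc j) \<and> poly (pderiv (FF IP x)) (complex_of_real (sP j)) = 0"
    and sP2: "proots (pderiv (FF IP x)) = (\<Sum>j<m. replicate_mset (cnt IP x (rs!j) - 1) (complex_of_real (rs!j))) + (\<Sum>j<m - 1. {#complex_of_real (sP j)#})"
    by (rule GL[OF finP neP, of x, folded rs_def, folded m_def])
  obtain sQ where sQ1: "\<forall>j. Suc j < p \<longrightarrow> rsQ!j < sQ j \<and> sQ j < rsQ!(Suc j) \<and> poly (pderiv (FF IQ x)) (complex_of_real (sQ j)) = 0"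
    and sQ2: "proots (pderiv (FF IQ x)) = (\<Sum>j<p. replicate_mset (cnt IQ x (rsQ!j) - 1) (complex_of_real (rsQ!j))) + (\<Sum>j<p - 1. {#complex_of_real (sQ j)#})"
    by (rule GL[OF finQ neQ, of x, folded SQ_def, folded rsQ_def, folded p_def])
  obtain sR where sR1: "\<forall>j. Suc j < q \<longrightarrow> rsR!j < sR j \<and> sR j < rsR!(Suc j) \<and> poly (pderiv (FF IR x)) (complex_of_real (sR j)) = 0"
    and sR2: "proots (pderiv (FF IR x)) = (\<Sum>j<q. replicate_mset (cnt IR x (rsR!j) - 1) (complex_of_real (rsR!j))) + (\<Sum>j<q - 1. {#complex_of_real (sR j)#})"
    by (rule GL[OF finR neR, of x, folded SR_def, folded rsR_def, folded q_def])
  have distrs: "distinct rs" using rs_def by simp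
  have m1: "p < m" using mpq q1 by simp
  have sP1': "rs!j < sP j" "sP j < rs!(Suc j)" "poly (pderiv (FF IP x)) (complex_of_real (sP j)) = 0"
    if "Suc j < m" for j using sP1 that by auto
  have sQ1': "rsQ!j < sQ j" "sQ j < rsQ!(Suc j)" "poly (pderiv (FF IQ x)) (complex_of_real (sQ j)) = 0"
    if "Suc j < p" for j using sQ1 that by auto
  have sR1': "rsR!j < sR j" "sR j < rsR!(Suc j)" "poly (pderiv (FF IR x)) (complex_of_real (sR j)) = 0"
    if "Suc j < q" for j using sR1 that by auto
  have gapP: "x i \<le> rs!j \<or> rs!(Suc j) \<le> x i" if "Suc j < m" "i \<in> IP" for i j
  proof -
    have "x i \<in> set rs" using setrs that(2) by simp
    then show ?thesis using gap[OF srt, of j "x i"] that(1) m_def by simp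
  qed
  have sP_notin: "sP j \<notin> x ` IP" if jm: "Suc j < m" for j
  proof
    assume "sP j \<in> x ` IP" then obtain i where i: "i \<in> IP" "sP j = x i" by auto
    have "x i \<le> rs!j \<or> rs!(Suc j) \<le> x i" by (rule gapP[OF jm i(1)])
    then show False using sP1'[OF jm] i(2) by auto
  qed
  have GGP0: "GG IP x (sP j) = 0" if "Suc j < m" for j
    using crit_iff[OF finP sP_notin[OF that]] sP1'(3)[OF that] by simp
  have GGsplit: "GG IP x t = GG IQ x t + GG IR x t" for t
    using GG_union[OF finQ finR disj] un by simp
  have cmpQ: "sP j \<le> sQ j" if j: "Suc j < p" for j
  proof (rule ccontr)
    assume "\<not> sP j \<le> sQ j" then have lt: "sQ j < sP j" by simp
    have jm: "Suc j < m" using j mpq by simp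
    have sQb: "rs!j < sQ j" "sQ j < rs!(Suc j)" using sQ1'[OF j] rsQn[of j] rsQn[of "Suc j"] j by auto
    have sQ_notin: "sQ j \<notin> x ` IP"
    proof
      assume "sQ j \<in> x ` IP" then obtain i where i: "i \<in> IP" "sQ j = x i" by auto
      have "x i \<le> rs!j \<or> rs!(Suc j) \<le> x i" by (rule gapP[OF jm i(1)])
      then show False using sQb i(2) by auto
    qed
    have "sQ j \<notin> x ` IQ" using sQ_notin un by auto
    then have GQ: "GG IQ x (sQ j) = 0" using crit_iff[OF finQ] sQ1'(3)[OF j] by simp
    have "sQ j < 0" using sQb(2) rsQn[of "Suc j"] rsQneg[of "Suc j"] j by simp
    then have "\<forall>i\<in>IR. sQ j < x i" using xR by (auto intro: less_le_trans)
    then have GR: "GG IR x (sQ j) < 0" using GG_neg[OF finR neR] by blast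
    have "\<forall>i\<in>IP. x i < sQ j \<or> sP j < x i"
    proof
      fix i assume i: "i \<in> IP"
      have "x i \<le> rs!j \<or> rs!(Suc j) \<le> x i" by (rule gapP[OF jm i])
      then show "x i < sQ j \<or> sP j < x i" using sQb sP1'[OF jm] by auto
    qed
    then have "GG IP x (sP j) < GG IP x (sQ j)" using GG_mono[OF finP neP lt] by blast
    then show False using GGP0[OF jm] GGsplit[of "sQ j"] GQ GR by linarith
  qed
  have cmpR: "sR j \<le> sP (p+j)" if j: "Suc j < q" for j
  proof (rule ccontr)
    assume "\<not> sR j \<le> sP (p+j)" then have lt: "sP (p+j) < sR j" by simp
    have jm: "Suc (p+j) < m" using j mpq by simp
    have sRb: "rs!(p+j) < sR j" "sR j < rs!(Suc (p+j))" using sR1'[OF j] rsRn[of j] rsRn[of "Suc j"] by auto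
    have sR_notin: "sR j \<notin> x ` IP"
    proof
      assume "sR j \<in> x ` IP" then obtain i where i: "i \<in> IP" "sR j = x i" by auto
      have "x i \<le> rs!(p+j) \<or> rs!(Suc (p+j)) \<le> x i" by (rule gapP[OF jm i(1)])
      then show False using sRb i(2) by auto
    qed
    have "sR j \<notin> x ` IR" using sR_notin un by auto
    then have GR: "GG IR x (sR j) = 0" using crit_iff[OF finR] sR1'(3)[OF j] by simp
    have "0 \<le> rsR!j" using rsRpos[of j] j by simp
    then have "sR j > 0" using sRb(1) rsRn[of j] by simp
    then have "\<forall>i\<in>IQ. x i < sR j" using xQ by (auto intro: less_trans)
    then have GQ: "GG IQ x (sR j) > 0" using GG_pos[OF finQ neQ] by blast
    have "\<forall>i\<in>IP. x i < sP (p+j) \<or> sR j < x i"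
    proof
      fix i assume i: "i \<in> IP"
      have "x i \<le> rs!(p+j) \<or> rs!(Suc (p+j)) \<le> x i" by (rule gapP[OF jm i])
      then show "x i < sP (p+j) \<or> sR j < x i" using sRb sP1'[OF jm] by auto
    qed
    then have "GG IP x (sR j) < GG IP x (sP (p+j))" using GG_mono[OF finP neP lt] by blast
    then show False using GGP0[OF jm] GGsplit[of "sR j"] GQ GR by linarith
  qed
  have sPneg: "sP j < 0" if j: "Suc j < p" for j
  proof -
    have jm: "Suc j < m" using j mpq by linarith
    have "rs!(Suc j) = rsQ!(Suc j)" by (rule rsQn[OF j])
    moreover have "rsQ!(Suc j) < 0" by (rule rsQneg[OF j])
    ultimately show ?thesis using sP1'(2)[OF jm] by linarith
  qed
  have sPpos: "sP j > 0" if j: "p \<le> j" "Suc j < m" for j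
  proof -
    obtain d where d: "j = p + d" using j(1) le_Suc_ex by blast
    have dq: "d < q" using d j(2) mpq by linarith
    have "rs!(p+d) = rsR!d" by (rule rsRn)
    moreover have "rsR!d \<ge> 0" by (rule rsRpos[OF dq])
    ultimately show ?thesis using sP1'(1)[OF j(2)] d by simp
  qed
  have sQneg: "sQ j < 0" if j: "Suc j < p" for j
    using sQ1'(2)[OF j] rsQneg[OF j] by linarith
  have sRpos: "sR j > 0" if j: "Suc j < q" for j
  proof -
    have "j < q" using j by linarith
    then show ?thesis using sR1'(1)[OF j] rsRpos[of j] by linarith
  qed
  have sumQ: "(\<Sum>j<p. real (cnt IQ x (rsQ!j) - 1) * rsQ!j) + (\<Sum>j<p-1. sQ j) = (real k - 1) / real k * (\<Sum>i\<in>IQ. x i)"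
  proof -
    have e1: "sum_mset (proots (pderiv (FF IQ x))) = complex_of_real ((\<Sum>j<p. real (cnt IQ x (rsQ!j) - 1) * rsQ!j) + (\<Sum>j<p-1. sQ j))"
      unfolding sQ2 by (simp add: sum_mset_sum' sum_mset_replicate_mset)
    have e2: "sum_mset (proots (pderiv (FF IQ x))) = complex_of_real ((real k - 1) / real k * (\<Sum>i\<in>IQ. x i))"
      using sum_proots_dFF[OF finQ neQ, of x] cardQ by simp
    show ?thesis using e1 e2 by (simp only: of_real_eq_iff)
  qed
  have sumR: "(\<Sum>j<q. real (cnt IR x (rsR!j) - 1) * rsR!j) + (\<Sum>j<q-1. sR j) = (real (n-k) - 1) / real (n-k) * (\<Sum>i\<in>IR. x i)"
  proof -
    have e1: "sum_mset (proots (pderiv (FF IR x))) = complex_of_real ((\<Sum>j<q. real (cnt IR x (rsR!j) - 1) * rsR!j) + (\<Sum>j<q-1. sR j))"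
      unfolding sR2 by (simp add: sum_mset_sum' sum_mset_replicate_mset)
    have e2: "sum_mset (proots (pderiv (FF IR x))) = complex_of_real ((real (n-k) - 1) / real (n-k) * (\<Sum>i\<in>IR. x i))"
      using sum_proots_dFF[OF finR neR, of x] cardR by simp
    show ?thesis using e1 e2 by (simp only: of_real_eq_iff)
  qed
  have absQ: "(\<Sum>j<p. real (cnt IQ x (rsQ!j) - 1) * \<bar>rsQ!j\<bar>) + (\<Sum>j<p-1. \<bar>sQ j\<bar>) = (real k - 1) / real k * (\<Sum>i\<in>IQ. \<bar>x i\<bar>)"
  proof -
    have 1: "(\<Sum>j<p. real (cnt IQ x (rsQ!j) - 1) * \<bar>rsQ!j\<bar>) = - (\<Sum>j<p. real (cnt IQ x (rsQ!j) - 1) * rsQ!j)"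
    proof -
      have "(\<Sum>j<p. real (cnt IQ x (rsQ!j) - 1) * \<bar>rsQ!j\<bar>) = (\<Sum>j<p. - (real (cnt IQ x (rsQ!j) - 1) * rsQ!j))"
      proof (intro sum.cong refl)
        fix j assume "j \<in> {..<p}"
        then have "rsQ!j < 0" using rsQneg by simp
        then show "real (cnt IQ x (rsQ!j) - 1) * \<bar>rsQ!j\<bar> = - (real (cnt IQ x (rsQ!j) - 1) * rsQ!j)" by simp
      qed
      then show ?thesis by (simp add: sum_negf)
    qed
    have 2: "(\<Sum>j<p-1. \<bar>sQ j\<bar>) = - (\<Sum>j<p-1. sQ j)"
    proof -
      have "(\<Sum>j<p-1. \<bar>sQ j\<bar>) = (\<Sum>j<p-1. - sQ j)"
      proof (intro sum.cong refl)
        fix j assume "j \<in> {..<p-1}"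
        then have "Suc j < p" by auto
        then have "sQ j < 0" using sQneg by simp
        then show "\<bar>sQ j\<bar> = - sQ j" by simp
      qed
      then show ?thesis by (simp add: sum_negf)
    qed
    have 3: "(\<Sum>i\<in>IQ. \<bar>x i\<bar>) = - (\<Sum>i\<in>IQ. x i)"
    proof -
      have "(\<Sum>i\<in>IQ. \<bar>x i\<bar>) = (\<Sum>i\<in>IQ. - x i)" using xQ by (intro sum.cong refl) auto
      then show ?thesis by (simp add: sum_negf)
    qed
    have "(\<Sum>j<p. real (cnt IQ x (rsQ!j) - 1) * \<bar>rsQ!j\<bar>) + (\<Sum>j<p-1. \<bar>sQ j\<bar>) = - ((real k - 1) / real k * (\<Sum>i\<in>IQ. x i))"
      using 1 2 sumQ by linarith
    then show ?thesis using 3 by simp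
  qed
  have absR: "(\<Sum>j<q. real (cnt IR x (rsR!j) - 1) * \<bar>rsR!j\<bar>) + (\<Sum>j<q-1. \<bar>sR j\<bar>) = (real (n-k) - 1) / real (n-k) * (\<Sum>i\<in>IR. \<bar>x i\<bar>)"
  proof -
    have 1: "(\<Sum>j<q. real (cnt IR x (rsR!j) - 1) * \<bar>rsR!j\<bar>) = (\<Sum>j<q. real (cnt IR x (rsR!j) - 1) * rsR!j)"
    proof (intro sum.cong refl)
      fix j assume "j \<in> {..<q}"
      then have "rsR!j \<ge> 0" using rsRpos by simp
      then show "real (cnt IR x (rsR!j) - 1) * \<bar>rsR!j\<bar> = real (cnt IR x (rsR!j) - 1) * rsR!j" by simp
    qed
    have 2: "(\<Sum>j<q-1. \<bar>sR j\<bar>) = (\<Sum>j<q-1. sR j)"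
    proof (intro sum.cong refl)
      fix j assume "j \<in> {..<q-1}"
      then have "Suc j < q" by auto
      then have "sR j > 0" using sRpos by simp
      then show "\<bar>sR j\<bar> = sR j" by simp
    qed
    have 3: "(\<Sum>i\<in>IR. \<bar>x i\<bar>) = (\<Sum>i\<in>IR. x i)" using xR by (intro sum.cong refl) auto
    show ?thesis using 1 2 3 sumR by simp
  qed
  have cntQ: "cnt IP x u = cnt IQ x u" if u: "u < 0" for u
  proof -
    have "{i\<in>IP. x i = u} = {i\<in>IQ. x i = u}" using un xR u by force
    then show ?thesis unfolding cnt_def by simp
  qed
  have cntR: "cnt IP x u = cnt IR x u" if u: "u \<ge> 0" for u
  proof -
    have "{i\<in>IP. x i = u} = {i\<in>IR. x i = u}" using un xQ u by force
    then show ?thesis unfolding cnt_def by simp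
  qed
  have LP1: "(\<Sum>j<m. real (cnt IP x (rs!j) - 1) * \<bar>rs!j\<bar>) = (\<Sum>j<p. real (cnt IQ x (rsQ!j) - 1) * \<bar>rsQ!j\<bar>) + (\<Sum>j<q. real (cnt IR x (rsR!j) - 1) * \<bar>rsR!j\<bar>)"
  proof -
    have "(\<Sum>j<m. real (cnt IP x (rs!j) - 1) * \<bar>rs!j\<bar>) = (\<Sum>j<p. real (cnt IP x (rs!j) - 1) * \<bar>rs!j\<bar>) + (\<Sum>j<q. real (cnt IP x (rs!(p+j)) - 1) * \<bar>rs!(p+j)\<bar>)"
      unfolding mpq by (rule sum_split_add)
    also have "(\<Sum>j<p. real (cnt IP x (rs!j) - 1) * \<bar>rs!j\<bar>) = (\<Sum>j<p. real (cnt IQ x (rsQ!j) - 1) * \<bar>rsQ!j\<bar>)"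
    proof (intro sum.cong refl)
      fix j assume "j \<in> {..<p}"
      then have j: "j < p" by simp
      show "real (cnt IP x (rs!j) - 1) * \<bar>rs!j\<bar> = real (cnt IQ x (rsQ!j) - 1) * \<bar>rsQ!j\<bar>"
        using rsQn[OF j] cntQ[OF rsQneg[OF j]] by simp
    qed
    also have "(\<Sum>j<q. real (cnt IP x (rs!(p+j)) - 1) * \<bar>rs!(p+j)\<bar>) = (\<Sum>j<q. real (cnt IR x (rsR!j) - 1) * \<bar>rsR!j\<bar>)"
    proof (intro sum.cong refl)
      fix j assume "j \<in> {..<q}"
      then have j: "j < q" by simp
      show "real (cnt IP x (rs!(p+j)) - 1) * \<bar>rs!(p+j)\<bar> = real (cnt IR x (rsR!j) - 1) * \<bar>rsR!j\<bar>"
        using rsRn[of j] cntR[OF rsRpos[OF j]] by simp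
    qed
    finally show ?thesis .
  qed
  have LP2: "(\<Sum>j<m-1. \<bar>sP j\<bar>) \<ge> (\<Sum>j<p-1. \<bar>sQ j\<bar>) + (\<Sum>j<q-1. \<bar>sR j\<bar>)"
  proof -
    have mm: "m - 1 = p + (q - 1)" using mpq q1 by linarith
    have "(\<Sum>j<m-1. \<bar>sP j\<bar>) = (\<Sum>j<p. \<bar>sP j\<bar>) + (\<Sum>j<q-1. \<bar>sP (p+j)\<bar>)"
      unfolding mm by (rule sum_split_add)
    moreover have "(\<Sum>j<p. \<bar>sP j\<bar>) = (\<Sum>j<p-1. \<bar>sP j\<bar>) + \<bar>sP (p-1)\<bar>"
    proof -
      have "p = Suc (p - 1)" using p1 by simp
      then show ?thesis by (metis sum.lessThan_Suc)
    qed
    moreover have "(\<Sum>j<p-1. \<bar>sQ j\<bar>) \<le> (\<Sum>j<p-1. \<bar>sP j\<bar>)"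
    proof (rule sum_mono)
      fix j assume "j \<in> {..<p-1}"
      then have j: "Suc j < p" by auto
      show "\<bar>sQ j\<bar> \<le> \<bar>sP j\<bar>" using cmpQ[OF j] sQneg[OF j] by simp
    qed
    moreover have "(\<Sum>j<q-1. \<bar>sR j\<bar>) \<le> (\<Sum>j<q-1. \<bar>sP (p+j)\<bar>)"
    proof (rule sum_mono)
      fix j assume "j \<in> {..<q-1}"
      then have j: "Suc j < q" by auto
      show "\<bar>sR j\<bar> \<le> \<bar>sP (p+j)\<bar>" using cmpR[OF j] sRpos[OF j] by simp
    qed
    moreover have "\<bar>sP (p-1)\<bar> \<ge> 0" by simp
    ultimately show ?thesis by linarith
  qed
  define z where "z = (\<lambda>j. if sP j < 0 then rs!j else rs!(Suc j))"
  define e where "e = (if sP (p-1) < 0 then rs!p else rs!(p-1))"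
  have zc1: "\<forall>j<p-1. z j = rs!j"
  proof (intro allI impI)
    fix j assume "j < p - 1"
    then have "Suc j < p" by linarith
    then show "z j = rs!j" using sPneg unfolding z_def by simp
  qed
  have zc2: "\<forall>j. p \<le> j \<and> j < m-1 \<longrightarrow> z j = rs!(Suc j)"
  proof (intro allI impI)
    fix j assume j: "p \<le> j \<and> j < m-1"
    then have "Suc j < m" by linarith
    then have "sP j > 0" using sPpos j by simp
    then show "z j = rs!(Suc j)" unfolding z_def by simp
  qed
  have zc3: "(z (p-1) = rs!(p-1) \<and> e = rs!p) \<or> (z (p-1) = rs!p \<and> e = rs!(p-1))"
  proof -
    have "Suc (p - 1) = p" using p1 by simp
    then show ?thesis unfolding z_def e_def by auto
  qed
  have zsM: "(\<Sum>j<m-1. {#complex_of_real (z j)#}) + {#complex_of_real e#} = (\<Sum>j<m. {#complex_of_real (rs!j)#})"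
    by (rule zsplit[where f = "\<lambda>r. {#complex_of_real r#}", OF p1 m1 zc1 zc2 zc3])
  have zsA: "(\<Sum>j<m-1. \<bar>z j\<bar>) + \<bar>e\<bar> = (\<Sum>j<m. \<bar>rs!j\<bar>)"
    by (rule zsplit[where f = abs, OF p1 m1 zc1 zc2 zc3])
  define M where "M = (\<Sum>j<m. replicate_mset (cnt IP x (rs!j) - 1) (complex_of_real (rs!j), complex_of_real (rs!j)))
     + (\<Sum>j<m-1. {#(complex_of_real (z j), complex_of_real (sP j))#}) + {#(complex_of_real e, 0)#}"
  have fstM: "image_mset fst M = proots (Pn n x)"
  proof -
    have "image_mset fst M = (\<Sum>j<m. replicate_mset (cnt IP x (rs!j) - 1) (complex_of_real (rs!j))) + ((\<Sum>j<m-1. {#complex_of_real (z j)#}) + {#complex_of_real e#})"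
      by (simp add: M_def image_mset_sum' img_rep add.assoc)
    also have "\<dots> = (\<Sum>j<m. replicate_mset (cnt IP x (rs!j) - 1) (complex_of_real (rs!j))) + (\<Sum>j<m. {#complex_of_real (rs!j)#})"
      using zsM by simp
    also have "\<dots> = (\<Sum>j<m. replicate_mset (cnt IP x (rs!j) - 1) (complex_of_real (rs!j)) + {#complex_of_real (rs!j)#})"
      by (rule sum.distrib[symmetric])
    also have "\<dots> = (\<Sum>j<m. replicate_mset (cnt IP x (rs!j)) (complex_of_real (rs!j)))"
    proof (intro sum.cong refl)
      fix j assume "j \<in> {..<m}"
      then have "rs!j \<in> x ` IP" using setrs m_def by (metis lessThan_iff nth_mem)
      then have "cnt IP x (rs!j) \<ge> 1" by (rule cnt_pos[OF finP])
      then show "replicate_mset (cnt IP x (rs!j) - 1) (complex_of_real (rs!j)) + {#complex_of_real (rs!j)#} = replicate_mset (cnt IP x (rs!j)) (complex_of_real (rs!j))"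
        by (metis add_mset_add_single le_add_diff_inverse2 replicate_mset_Suc Suc_eq_plus1)
    qed
    also have "\<dots> = proots (FF IP x)" using proots_FF_rs[OF finP, of x] rs_def m_def by simp
    finally show ?thesis using PnF by simp
  qed
  have sndM: "image_mset snd M = proots (pderiv (Pn n x)) + {#0#}"
    by (simp add: M_def image_mset_sum' img_rep sP2 PnF)
  have cost: "(\<Sum>pr\<in>#M. cmod (fst pr - snd pr)) = (\<Sum>j<m-1. \<bar>z j - sP j\<bar>) + \<bar>e\<bar>"
    by (simp add: M_def image_mset_sum' sum_mset_sum' img_rep cmod_real_diff)
  have cost2: "(\<Sum>j<m-1. \<bar>z j - sP j\<bar>) = (\<Sum>j<m-1. \<bar>z j\<bar>) - (\<Sum>j<m-1. \<bar>sP j\<bar>)"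
  proof -
    have "(\<Sum>j<m-1. \<bar>z j - sP j\<bar>) = (\<Sum>j<m-1. \<bar>z j\<bar> - \<bar>sP j\<bar>)"
    proof (intro sum.cong refl)
      fix j assume "j \<in> {..<m-1}"
      then have jm: "Suc j < m" by auto
      show "\<bar>z j - sP j\<bar> = \<bar>z j\<bar> - \<bar>sP j\<bar>"
      proof (cases "sP j < 0")
        case True
        then show ?thesis using sP1'(1)[OF jm] unfolding z_def by simp
      next
        case False
        then show ?thesis using sP1'(2)[OF jm] unfolding z_def by simp
      qed
    qed
    then show ?thesis by (simp add: sum_subtractf)
  qed
  have d1le: "d1 (proots (Pn n x)) (proots (pderiv (Pn n x)) + {#0#}) \<le> (\<Sum>j<m. \<bar>rs!j\<bar>) - (\<Sum>j<m-1. \<bar>sP j\<bar>)"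
    using d1_le[OF fstM sndM] cost cost2 zsA by linarith
  have AB: "(\<Sum>i\<in>IP. \<bar>x i\<bar>) = (\<Sum>j<m. real (cnt IP x (rs!j)) * \<bar>rs!j\<bar>)"
    using sum_cnt[OF finP, of x abs] sum_nth_set[OF distrs, of "\<lambda>u. real (cnt IP x u) * \<bar>u\<bar>"] setrs m_def by simp
  have c1: "(\<Sum>j<m. real (cnt IP x (rs!j) - 1) * \<bar>rs!j\<bar>) = (\<Sum>j<m. real (cnt IP x (rs!j)) * \<bar>rs!j\<bar>) - (\<Sum>j<m. \<bar>rs!j\<bar>)"
  proof -
    have "(\<Sum>j<m. real (cnt IP x (rs!j) - 1) * \<bar>rs!j\<bar>) = (\<Sum>j<m. real (cnt IP x (rs!j)) * \<bar>rs!j\<bar> - \<bar>rs!j\<bar>)"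
    proof (intro sum.cong refl)
      fix j assume "j \<in> {..<m}"
      then have "rs!j \<in> x ` IP" using setrs m_def by (metis lessThan_iff nth_mem)
      then have "cnt IP x (rs!j) \<ge> 1" by (rule cnt_pos[OF finP])
      then show "real (cnt IP x (rs!j) - 1) * \<bar>rs!j\<bar> = real (cnt IP x (rs!j)) * \<bar>rs!j\<bar> - \<bar>rs!j\<bar>"
        by (simp add: of_nat_diff algebra_simps)
    qed
    then show ?thesis by (simp add: sum_subtractf)
  qed
  have ABsplit: "(\<Sum>i\<in>IP. \<bar>x i\<bar>) = (\<Sum>i\<in>IQ. \<bar>x i\<bar>) + (\<Sum>i\<in>IR. \<bar>x i\<bar>)"
    unfolding un by (rule sum.union_disjoint[OF finQ finR disj])
  define A where "A = (\<Sum>i\<in>IQ. \<bar>x i\<bar>)"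
  define B where "B = (\<Sum>i\<in>IR. \<bar>x i\<bar>)"
  have kpos: "real k > 0" using assms(1) by simp
  have nkpos: "real (n - k) > 0" using assms(2) by simp
  have kk: "(real k - 1) / real k * A = A - 1 / real k * A" using kpos by (simp add: field_simps)
  have nk: "(real (n-k) - 1) / real (n-k) * B = B - 1 / real (n-k) * B" using nkpos by (simp add: field_simps)
  have "d1 (proots (Pn n x)) (proots (pderiv (Pn n x)) + {#0#}) \<le> 1 / real k * A + 1 / real (n-k) * B"
    using d1le AB c1 ABsplit[folded A_def B_def] LP1 LP2 absQ[folded A_def] absR[folded B_def] kk nk by linarith
  then show ?thesis unfolding A_def B_def IQ_def IR_def .
qed

end
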